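(* Let $G=(g_1,\dots,g_k)\in\mathbb{N}_0^k$ be telescopic with $g_1>0$, $c(G)=(c_2,\dots,c_k)$ and $\gcd(G)=d$, and suppose $g_n=c_mg_m$ for some $1<n<m\le k$. Then $g_n=z_nC_{n,k}$ where $z_n$ is a non-negative multiple of $d$ with $\gcd(z_n/d,c_n)=1$; moreover $\gcd(z_n/d,c_m)=1$, and $\gcd(c_j,c_m)=1$ for all $j$ with $n<j<m$.
   Context: $\langle\cdot\rangle$ denotes the set of $\mathbb{N}_0$-linear combinations. $G_i=(g_1,\dots,g_i)$, $d_i=\gcd(G_i)$, $c_j=d_{j-1}/d_j$; $G$ is telescopic if $c_jg_j\in\langle G_{j-1}\rangle$ for all $2\le j\le k$. $C_{a,b}=\prod_{j=a+1}^b c_j$, with the empty product equal to $1$. *)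

theory Defs
  imports Main
begin

text \<open>A sequence G = (g_1,...,g_k) of non-negative integers is represented by a
function g :: nat => nat, of which only the values g 1, ..., g k matter.\<close>

definition dseq :: "(nat \<Rightarrow> nat) \<Rightarrow> nat \<Rightarrow> nat" where
  "dseq g i = Gcd (g ` {1..i})"

definition cseq :: "(nat \<Rightarrow> nat) \<Rightarrow> nat \<Rightarrow> nat" where
  "cseq g j = dseq g (j - 1) div dseq g j"

definition lincomb :: "(nat \<Rightarrow> nat) \<Rightarrow> nat \<Rightarrow> nat set" where
  "lincomb g i = {x. \<exists>a :: nat \<Rightarrow> nat. x = (\<Sum>l = 1..i. a l * g l)}"

definition telescopic :: "(nat \<Rightarrow> nat) \<Rightarrow> nat \<Rightarrow> bool" where
  "telescopic g k \<longleftrightarrow> (\<forall>j. 2 \<le> j \<and> j \<le> k \<longrightarrow> cseq g j * g j \<in> lincomb g (j - 1))"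

definition Cprod :: "(nat \<Rightarrow> nat) \<Rightarrow> nat \<Rightarrow> nat \<Rightarrow> nat" where
  "Cprod g a b = (\<Prod>j = a + 1..b. cseq g j)"

end

theory Submission
  imports Defs
begin

lemma dseq_Suc: "dseq g (Suc i) = gcd (dseq g i) (g (Suc i))"
proof -
  have "{1..Suc i} = insert (Suc i) {1..i}" by auto
  then show ?thesis unfolding dseq_def by (simp add: gcd.commute)
qed

lemma dseq_dvd_g: "1 \<le> l \<Longrightarrow> l \<le> i \<Longrightarrow> dseq g i dvd g l"
  unfolding dseq_def by (rule Gcd_dvd) auto

lemma dseq_mono: "i \<le> j \<Longrightarrow> dseq g j dvd dseq g i"
  unfolding dseq_def by (rule Gcd_greatest) (auto intro: Gcd_dvd)

lemma dseq_pos: "g 1 > 0 \<Longrightarrow> 1 \<le> i \<Longrightarrow> dseq g i > 0"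
  using dseq_dvd_g[of 1 i g] by (metis dvd_0_left_iff gr0I le_refl less_irrefl)

lemma cseq_mult: "g 1 > 0 \<Longrightarrow> 2 \<le> j \<Longrightarrow> cseq g j * dseq g j = dseq g (j - 1)"
proof -
  assume a: "g 1 > 0" "2 \<le> j"
  have "dseq g j dvd dseq g (j - 1)" by (rule dseq_mono) simp
  then show ?thesis unfolding cseq_def by simp
qed

lemma Cprod_tele: "g 1 > 0 \<Longrightarrow> 1 \<le> n \<Longrightarrow> n \<le> k \<Longrightarrow> dseq g n = dseq g k * Cprod g n k"
proof (induction k)
  case 0 then show ?case by simp
next
  case (Suc k)
  show ?case
  proof (cases "n = Suc k")
    case True then show ?thesis by (simp add: Cprod_def)
  next
    case False
    then have nk: "n \<le> k" using Suc by simp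
    have "Cprod g n (Suc k) = Cprod g n k * cseq g (Suc k)"
      unfolding Cprod_def using nk by simp
    moreover have "cseq g (Suc k) * dseq g (Suc k) = dseq g k"
      using cseq_mult[of g "Suc k"] Suc nk by simp
    ultimately show ?thesis using Suc.IH[OF Suc.prems(1,2) nk]
      by (simp add: mult_ac)
  qed
qed

theorem mainTheorem20:
  fixes g :: "nat \<Rightarrow> nat" and k n m :: nat
  assumes "telescopic g k"
    and "g 1 > 0"
    and "1 < n" and "n < m" and "m \<le> k"
    and "g n = cseq g m * g m"
  shows "\<exists>z :: nat. g n = z * Cprod g n k
           \<and> dseq g k dvd z
           \<and> coprime (z div dseq g k) (cseq g n)
           \<and> coprime (z div dseq g k) (cseq g m)
           \<and> (\<forall>j. n < j \<and> j < m \<longrightarrow> coprime (cseq g j) (cseq g m))"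
proof -
  note g1 = assms(2)
  define D where "D = dseq g (m - 1)"
  define e where "e = dseq g m"
  define c where "c = cseq g m"
  define dn where "dn = dseq g n"
  define dk where "dk = dseq g k"
  have e_gcd: "e = gcd D (g m)" unfolding e_def D_def
    using dseq_Suc[of g "m - 1"] assms by simp
  have epos: "e > 0" unfolding e_def using dseq_pos[of g, OF g1] assms by simp
  have Dec: "D = e * c" unfolding D_def e_def c_def using cseq_mult[of g m, OF g1] assms
    by (simp add: mult_ac)
  obtain y where y: "g m = e * y" using e_gcd by (metis gcd_dvd2 dvdE)
  have "e * gcd c y = e * 1" using e_gcd Dec y by (simp add: gcd_mult_distrib_nat)
  then have cop: "coprime c y" using epos by (simp add: coprime_iff_gcd_eq_1)
  have gn: "g n = e * c * y" using assms(6) y unfolding c_def by (simp add: mult_ac)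
  have "D dvd dn" unfolding D_def dn_def by (rule dseq_mono) (use assms in simp)
  then obtain t where t: "dn = D * t" by (metis dvdE)
  have "dn dvd g n" unfolding dn_def by (rule dseq_dvd_g) (use assms in auto)
  then have "e * c * t dvd e * c * y" using t Dec gn by (simp add: mult_ac)
  moreover have "e * c > 0"
  proof -
    have "D > 0" unfolding D_def by (rule dseq_pos[of g, OF g1]) (use assms in simp)
    then show ?thesis using Dec by simp
  qed
  ultimately have tdy: "t dvd y" by (simp add: mult_dvd_mono nat_mult_dvd_cancel_disj)
  have dnpos: "dn > 0" unfolding dn_def using dseq_pos[of g, OF g1] assms by simp
  define q where "q = g n div dn"
  have gnq: "g n = q * dn" unfolding q_def using \<open>dn dvd g n\<close> by simp
  have qy: "q dvd y"
  proof -
    obtain s where "y = t * s" using tdy by (metis dvdE)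
    then have "g n = (e*c*t) * s" using gn by (simp add: mult_ac)
    then have "q = s" using gnq t Dec dnpos by (metis mult.commute mult_cancel_left gr_implies_not0)
    then show ?thesis using \<open>y = t * s\<close> by simp
  qed
  have dkpos: "dk > 0" unfolding dk_def using dseq_pos[of g, OF g1] assms by simp
  have tele: "dn = dk * Cprod g n k" unfolding dn_def dk_def
    by (rule Cprod_tele) (use assms in auto)
  define z where "z = dk * q"
  have 1: "g n = z * Cprod g n k" using gnq tele z_def by (simp add: mult_ac)
  have 2: "dk dvd z" unfolding z_def by simp
  have zq: "z div dk = q" unfolding z_def using dkpos by simp
  have 3: "coprime q (cseq g n)"
  proof -
    have dng: "dn = gcd (dseq g (n - 1)) (g n)" unfolding dn_def
      using dseq_Suc[of g "n - 1"] assms by simp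
    have "coprime (dseq g (n - 1) div dn) (g n div dn)"
      unfolding dng by (rule div_gcd_coprime) (use dseq_pos[of g "n - 1", OF g1] assms in simp)
    then show ?thesis unfolding q_def cseq_def dn_def by (simp add: coprime_commute)
  qed
  have 4: "coprime q c" using coprime_divisors[OF qy dvd_refl] cop by (simp add: coprime_commute)
  have 5: "coprime (cseq g j) c" if j: "n < j" "j < m" for j
  proof -
    have a: "cseq g j * dseq g j = dseq g (j - 1)" using cseq_mult[of g j, OF g1] j assms by simp
    have b: "dseq g (j - 1) dvd dn" unfolding dn_def by (rule dseq_mono) (use j in simp)
    have cc: "D dvd dseq g j" unfolding D_def by (rule dseq_mono) (use j in simp)
    have "cseq g j * D dvd dn" using a b cc by (metis dvd_trans mult_dvd_mono dvd_refl)
    then have "cseq g j * D dvd t * D" using t by (simp add: mult.commute)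
    moreover have "D > 0" using Dec epos \<open>e * c > 0\<close> by simp
    ultimately have "cseq g j dvd t" by simp
    then have "cseq g j dvd y" using tdy by (rule dvd_trans)
    then show ?thesis using coprime_divisors[OF _ dvd_refl] cop by (metis coprime_commute)
  qed
  show ?thesis
    apply (rule exI[of _ z])
    using 1 2 3 4 5 zq unfolding dk_def c_def by auto
qed

end
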